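(* Let $S\subseteq\mathbb{R}^n\times\mathbb{R}^m$ be convex. A set $\bar S\subseteq S$ is a solution of the convex projection (CP) if and only if it is a solution of the multi-objective problem (MOCP).
   Context: (CP): compute $Y=\{y\in\mathbb{R}^m:\exists x,(x,y)\in S\}$. A set $\bar S\subseteq S$ is a solution of (CP) if $Y\subseteq\operatorname{cl}\operatorname{conv}\operatorname{proj}_y[\bar S]$, where $\operatorname{proj}_y(x,y)=y$. (MOCP): minimize $P(x,y)=(y,-\mathbf{1}^\top y)$ w.r.t. $\le_{\mathbb{R}^{m+1}_+}$ subject to $(x,y)\in S$ ($\mathbf{1}\in\mathbb{R}^m$ all-ones), with upper image $\mathcal{P}=\operatorname{cl}(P[S]+\mathbb{R}^{m+1}_+)$. A set $\bar S\subseteq S$ is a solution of (MOCP) if $\mathcal{P}=\operatorname{cl}\operatorname{conv}(P[\bar S]+\mathbb{R}^{m+1}_+)$ (all feasible points are minimizers of (MOCP), so this coincides with the general notion of a solution as an infimizer consisting of minimizers). *)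

theory Defs
  imports "HOL-Analysis.Analysis"
begin

text \<open>Points of R^n x R^m are pairs (x, y) with x :: real^'n, y :: real^'m.
  R^(m+1) is represented as (real^'m) \<times> real (the last coordinate is the extra one).\<close>

definition proj_y :: "(real^'n) \<times> (real^'m) \<Rightarrow> real^'m" where
  "proj_y p = snd p"

definition proj_image :: "((real^'n) \<times> (real^'m)) set \<Rightarrow> (real^'m) set" where
  "proj_image S = {y. \<exists>x. (x, y) \<in> S}"

definition CP_solution :: "((real^'n) \<times> (real^'m)) set \<Rightarrow> ((real^'n) \<times> (real^'m)) set \<Rightarrow> bool" where
  "CP_solution S Sbar \<longleftrightarrow> Sbar \<subseteq> S \<and> proj_image S \<subseteq> closure (convex hull (proj_y ` Sbar))"

definition Pobj :: "(real^'n) \<times> (real^'m) \<Rightarrow> (real^'m) \<times> real" where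
  "Pobj p = (snd p, - (\<Sum>i\<in>UNIV. snd p $ i))"

definition orthant :: "((real^'m) \<times> real) set" where
  "orthant = {(v, t). (\<forall>i. 0 \<le> v $ i) \<and> 0 \<le> t}"

definition plus_orthant :: "((real^'m) \<times> real) set \<Rightarrow> ((real^'m) \<times> real) set" where
  "plus_orthant A = {a + c | a c. a \<in> A \<and> c \<in> orthant}"

definition upper_image :: "((real^'n) \<times> (real^'m)) set \<Rightarrow> ((real^'m) \<times> real) set" where
  "upper_image S = closure (plus_orthant (Pobj ` S))"

definition MOCP_solution :: "((real^'n) \<times> (real^'m)) set \<Rightarrow> ((real^'n) \<times> (real^'m)) set \<Rightarrow> bool" where
  "MOCP_solution S Sbar \<longleftrightarrow> Sbar \<subseteq> S \<and>
     upper_image S = closure (convex hull (plus_orthant (Pobj ` Sbar)))"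

end

theory Submission
  imports Defs
begin

definition Lmap :: "real^'m \<Rightarrow> (real^'m) \<times> real" where
  "Lmap y = (y, - (\<Sum>i\<in>UNIV. y $ i))"

lemma linear_Lmap: "linear Lmap"
  by (rule linearI) (auto simp: Lmap_def sum.distrib sum_distrib_left)

lemma Pobj_Lmap: "Pobj p = Lmap (proj_y p)"
  by (simp add: Pobj_def Lmap_def proj_y_def)

lemma Pobj_image: "Pobj ` A = Lmap ` (proj_y ` A)"
  by (auto simp: Pobj_Lmap)

lemma linear_proj_y: "linear proj_y"
  unfolding proj_y_def by (rule linear_snd)

lemma convex_orthant: "convex orthant"
  unfolding orthant_def convex_def by (auto intro!: add_nonneg_nonneg)

lemma convex_plus_orthant:
  assumes "convex A" shows "convex (plus_orthant A)"
proof -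
  have "plus_orthant A = (\<Union>x\<in>A. \<Union>y\<in>orthant. {x + y})"
    unfolding plus_orthant_def by blast
  thus ?thesis using convex_sums[OF assms convex_orthant] by simp
qed

lemma plus_orthant_mono: "A \<subseteq> B \<Longrightarrow> plus_orthant A \<subseteq> plus_orthant B"
  unfolding plus_orthant_def by blast

lemma orthant_0: "0 \<in> orthant"
  by (simp add: orthant_def zero_prod_def)

lemma subset_plus_orthant: "A \<subseteq> plus_orthant A"
proof
  fix a assume "a \<in> A"
  then have "a + 0 \<in> plus_orthant A" unfolding plus_orthant_def using orthant_0 by blast
  then show "a \<in> plus_orthant A" by simp
qed

lemma plus_orthant_hull: "plus_orthant (convex hull A) \<subseteq> convex hull (plus_orthant A)"
proof
  fix z assume "z \<in> plus_orthant (convex hull A)"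
  then obtain a c where z: "z = a + c" "a \<in> convex hull A" "c \<in> orthant"
    unfolding plus_orthant_def by blast
  have "z \<in> (\<lambda>x. c + x) ` (convex hull A)" using z by (auto simp: add.commute)
  also have "\<dots> = convex hull ((\<lambda>x. c + x) ` A)" by (rule convex_hull_translation[symmetric])
  also have "\<dots> \<subseteq> convex hull (plus_orthant A)"
  proof (rule hull_mono, rule subsetI)
    fix w assume "w \<in> (\<lambda>x. c + x) ` A"
    then obtain a' where "a' \<in> A" "w = a' + c" by (auto simp: add.commute)
    then show "w \<in> plus_orthant A" unfolding plus_orthant_def using z(3) by blast
  qed
  finally show "z \<in> convex hull (plus_orthant A)" .
qed

lemma hull_plus_orthant: "convex hull (plus_orthant (Lmap ` B)) \<subseteq> plus_orthant (Lmap ` (convex hull B))"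
proof (rule hull_minimal)
  show "plus_orthant (Lmap ` B) \<subseteq> plus_orthant (Lmap ` (convex hull B))"
    by (intro plus_orthant_mono image_mono hull_subset)
  show "convex (plus_orthant (Lmap ` (convex hull B)))"
    by (intro convex_plus_orthant convex_linear_image linear_Lmap convex_convex_hull)
qed

lemma key:
  fixes y :: "real^'m"
  assumes "Lmap y \<in> closure (plus_orthant (Lmap ` C))"
  shows "y \<in> closure C"
proof -
  obtain z where zin: "\<And>n. z n \<in> plus_orthant (Lmap ` C)" and zl: "z \<longlonglongrightarrow> Lmap y"
    using assms unfolding closure_sequential by blast
  have "\<forall>n. \<exists>c v t. c \<in> C \<and> (\<forall>i. 0 \<le> v $ i) \<and> 0 \<le> t \<and> z n = Lmap c + (v, t)"
  proof
    fix n
    from zin[of n] obtain a d where "z n = a + d" "a \<in> Lmap ` C" "d \<in> orthant"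
      unfolding plus_orthant_def by blast
    then show "\<exists>c v t. c \<in> C \<and> (\<forall>i. 0 \<le> v $ i) \<and> 0 \<le> t \<and> z n = Lmap c + (v, t)"
      unfolding orthant_def by (cases d) auto
  qed
  then obtain c v t where cvt: "\<And>n. c n \<in> C" "\<And>n i. 0 \<le> v n $ i" "\<And>n. 0 \<le> t n"
      "\<And>n. z n = Lmap (c n) + (v n, t n)"
    by metis
  have f: "\<And>n. fst (z n) = c n + v n" and sn: "\<And>n. snd (z n) = - (\<Sum>i\<in>UNIV. c n $ i) + t n"
    using cvt(4) by (auto simp: Lmap_def)
  have fl: "(\<lambda>n. fst (z n)) \<longlonglongrightarrow> y"
    using tendsto_fst[OF zl] by (simp add: Lmap_def)
  have sl: "(\<lambda>n. snd (z n)) \<longlonglongrightarrow> - (\<Sum>i\<in>UNIV. y $ i)"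
    using tendsto_snd[OF zl] by (simp add: Lmap_def)
  have "(\<lambda>n. (\<Sum>i\<in>UNIV. fst (z n) $ i) + snd (z n)) \<longlonglongrightarrow> (\<Sum>i\<in>UNIV. y $ i) + - (\<Sum>i\<in>UNIV. y $ i)"
    by (intro tendsto_add sl tendsto_sum tendsto_vec_nth fl)
  moreover have "\<And>n. (\<Sum>i\<in>UNIV. fst (z n) $ i) + snd (z n) = (\<Sum>i\<in>UNIV. v n $ i) + t n"
    by (simp add: f sn sum.distrib)
  ultimately have sv: "(\<lambda>n. (\<Sum>i\<in>UNIV. v n $ i) + t n) \<longlonglongrightarrow> 0" by simp
  have vl: "v \<longlonglongrightarrow> 0"
  proof (rule vec_tendstoI)
    fix i
    have "\<And>n. v n $ i \<le> (\<Sum>i\<in>UNIV. v n $ i) + t n"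
    proof -
      fix n
      have "v n $ i \<le> (\<Sum>i\<in>UNIV. v n $ i)"
        by (rule member_le_sum) (auto intro: cvt(2))
      then show "v n $ i \<le> (\<Sum>i\<in>UNIV. v n $ i) + t n" using cvt(3)[of n] by linarith
    qed
    then have "(\<lambda>n. v n $ i) \<longlonglongrightarrow> 0"
      by (intro tendsto_sandwich[OF _ _ tendsto_const sv]) (auto intro!: always_eventually cvt(2))
    then show "(\<lambda>n. v n $ i) \<longlonglongrightarrow> 0 $ i" by simp
  qed
  have "(\<lambda>n. fst (z n) - v n) \<longlonglongrightarrow> y - 0"
    by (intro tendsto_diff fl vl)
  then have "c \<longlonglongrightarrow> y" by (simp add: f)
  then show ?thesis unfolding closure_sequential using cvt(1) by blast
qed

theorem mainTheorem5:
  fixes S Sbar :: "((real^'n) \<times> (real^'m)) set"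
  assumes "convex S"
  shows "CP_solution S Sbar \<longleftrightarrow> MOCP_solution S Sbar"
proof -
  define Y where "Y = proj_y ` S"
  define B where "B = proj_y ` Sbar"
  define C where "C = convex hull B"
  have Yeq: "proj_image S = Y" unfolding Y_def proj_image_def proj_y_def by force
  have convY: "convex Y" unfolding Y_def by (intro convex_linear_image linear_proj_y assms)
  have ui: "upper_image S = closure (plus_orthant (Lmap ` Y))"
    unfolding upper_image_def Y_def Pobj_image ..
  have rhs: "convex hull (plus_orthant (Pobj ` Sbar)) = convex hull (plus_orthant (Lmap ` B))"
    unfolding B_def Pobj_image ..
  have CB: "Lmap ` C = convex hull (Lmap ` B)"
    unfolding C_def by (rule convex_hull_linear_image[OF linear_Lmap])
  have sub1: "convex hull (plus_orthant (Lmap ` B)) \<subseteq> plus_orthant (Lmap ` C)"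
    unfolding C_def by (rule hull_plus_orthant)
  have sub2: "plus_orthant (Lmap ` C) \<subseteq> convex hull (plus_orthant (Lmap ` B))"
    unfolding CB by (rule plus_orthant_hull)
  have contL: "continuous_on A Lmap" for A
    by (intro linear_continuous_on linear_conv_bounded_linear[THEN iffD1] linear_Lmap)
  show ?thesis
  proof
    assume cp: "CP_solution S Sbar"
    then have ss: "Sbar \<subseteq> S" and YC: "Y \<subseteq> closure C"
      unfolding CP_solution_def Yeq C_def B_def by auto
    have BY: "B \<subseteq> Y" unfolding B_def Y_def using ss by blast
    have "closure (plus_orthant (Lmap ` Y)) = closure (convex hull (plus_orthant (Lmap ` B)))"
    proof
      show "closure (convex hull (plus_orthant (Lmap ` B))) \<subseteq> closure (plus_orthant (Lmap ` Y))"
      proof (intro closure_mono hull_minimal)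
        show "plus_orthant (Lmap ` B) \<subseteq> plus_orthant (Lmap ` Y)"
          using BY by (intro plus_orthant_mono image_mono)
        show "convex (plus_orthant (Lmap ` Y))"
          by (intro convex_plus_orthant convex_linear_image linear_Lmap convY)
      qed
      show "closure (plus_orthant (Lmap ` Y)) \<subseteq> closure (convex hull (plus_orthant (Lmap ` B)))"
      proof (intro closure_minimal closed_closure subsetI)
        fix w assume "w \<in> plus_orthant (Lmap ` Y)"
        then obtain y d where w: "w = Lmap y + d" "y \<in> Y" "d \<in> orthant"
          unfolding plus_orthant_def by blast
        have "Lmap ` closure C \<subseteq> closure (Lmap ` C)"
          by (rule image_closure_subset[OF contL closed_closure closure_subset])
        then have "Lmap y \<in> closure (Lmap ` C)" using w(2) YC by blast
        then have "w \<in> (+) d ` closure (Lmap ` C)" using w(1) by (auto simp: add.commute)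
        also have "\<dots> = closure ((+) d ` (Lmap ` C))" by (rule closure_translation[symmetric])
        also have "\<dots> \<subseteq> closure (plus_orthant (Lmap ` C))"
        proof (rule closure_mono, rule subsetI)
          fix u assume "u \<in> (+) d ` (Lmap ` C)"
          then obtain a where "a \<in> Lmap ` C" "u = a + d" by (auto simp: add.commute)
          then show "u \<in> plus_orthant (Lmap ` C)" unfolding plus_orthant_def using w(3) by blast
        qed
        also have "\<dots> \<subseteq> closure (convex hull (plus_orthant (Lmap ` B)))"
          by (rule closure_mono[OF sub2])
        finally show "w \<in> closure (convex hull (plus_orthant (Lmap ` B)))" .
      qed
    qed
    then show "MOCP_solution S Sbar"
      unfolding MOCP_solution_def ui rhs using ss by simp
  next
    assume mo: "MOCP_solution S Sbar"
    then have ss: "Sbar \<subseteq> S" and eq: "closure (plus_orthant (Lmap ` Y)) = closure (convex hull (plus_orthant (Lmap ` B)))"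
      unfolding MOCP_solution_def ui rhs by auto
    have "Y \<subseteq> closure C"
    proof
      fix y assume "y \<in> Y"
      then have "Lmap y \<in> plus_orthant (Lmap ` Y)" using subset_plus_orthant by blast
      then have "Lmap y \<in> closure (plus_orthant (Lmap ` Y))" using closure_subset by blast
      also have "\<dots> \<subseteq> closure (plus_orthant (Lmap ` C))" unfolding eq by (rule closure_mono[OF sub1])
      finally show "y \<in> closure C" by (rule key)
    qed
    then show "CP_solution S Sbar"
      unfolding CP_solution_def Yeq C_def B_def using ss by simp
  qed
qed

end
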